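(* Let $(X,d_X)$ be a metric space and $(Y,d_Y)$ a metric space with the uniform Stone property, i.e. $\Delta_Y^{(u)}(r)>0$ for all $r>0$. If there exists a uniform embedding $f\colon X\to Y$, then $X$ has the uniform Stone property, i.e. $\Delta_X^{(u)}(r)>0$ for all $r>0$. If $f$ is a bi-Lipschitz embedding and there is $c>0$ such that $\Delta_Y^{(u)}(r)\geq cr$ for all $r>0$, then $\Delta_X^{(u)}(r)\geq \frac{c}{\mathrm{dist}(f)}r$ for all $r>0$.
   Context: For a metric space $X$ and a cover $\mathcal{U}$ of $X$: $\mathrm{diam}(\mathcal{U})=\sup_{U\in\mathcal{U}}\mathrm{diam}(U)$; $\mathcal{L}(\mathcal{U})=\sup\{d\in[0,\infty): \text{every } E\subseteq X \text{ with } \mathrm{diam}(E)<d \text{ is contained in some } U\in\mathcal{U}\}$; $\mathcal{U}$ is point-finite if each point lies in only finitely many members. $\Delta_X^{(u)}(r)=\sup\{\mathcal{L}(\mathcal{U}): \mathcal{U} \text{ a point-finite cover of } X,\ \mathrm{diam}(\mathcal{U})\leq r\}$. For $f\colon X\to Y$: $\omega_f(t)=\sup\{d_Y(f(x_1),f(x_2)): d_X(x_1,x_2)\leq t\}$, $\rho_f(t)=\inf\{d_Y(f(x_1),f(x_2)): d_X(x_1,x_2)\geq t\}$; $f$ is a uniform embedding if $\lim_{t\to0}\omega_f(t)=0$ and $\rho_f(t)>0$ for all $t>0$; a bi-Lipschitz embedding if there is $A\geq1$ with $\omega_f(t)\leq At$, $\rho_f(t)\geq t/A$. $\mathrm{Lip}(f)=\sup_{x_1\neq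 x_2} d_Y(f(x_1),f(x_2))/d_X(x_1,x_2)$, and for injective $f$, $\mathrm{dist}(f)=\mathrm{Lip}(f)\cdot\mathrm{Lip}(f^{-1})$. *)

theory Defs
  imports "HOL-Analysis.Analysis"
begin

definition ediam :: "'a::metric_space set \<Rightarrow> ereal" where
  "ediam E = (if E = {} then 0 else (SUP p \<in> E \<times> E. ereal (dist (fst p) (snd p))))"

definition cover_diam :: "'a::metric_space set set \<Rightarrow> ereal" where
  "cover_diam \<U> = (SUP U \<in> \<U>. ediam U)"

definition lebesgue_number :: "'a::metric_space set \<Rightarrow> 'a set set \<Rightarrow> ereal" where
  "lebesgue_number S \<U> =
     (SUP d \<in> {d::real. 0 \<le> d \<and>
        (\<forall>E. E \<subseteq> S \<and> ediam E < ereal d \<longrightarrow> (\<exists>U\<in>\<U>. E \<subseteq> U))}. ereal d)"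

definition point_finite :: "'a set set \<Rightarrow> bool" where
  "point_finite \<U> \<longleftrightarrow> (\<forall>x. finite {U \<in> \<U>. x \<in> U})"

definition is_cover :: "'a set \<Rightarrow> 'a set set \<Rightarrow> bool" where
  "is_cover S \<U> \<longleftrightarrow> (\<forall>U\<in>\<U>. U \<subseteq> S) \<and> \<Union>\<U> = S"

definition Delta_u :: "'a::metric_space set \<Rightarrow> real \<Rightarrow> ereal" where
  "Delta_u S r = (SUP \<U> \<in> {\<U>. is_cover S \<U> \<and> point_finite \<U> \<and> cover_diam \<U> \<le> ereal r}.
                    lebesgue_number S \<U>)"

definition modulus_cont :: "('a::metric_space \<Rightarrow> 'b::metric_space) \<Rightarrow> real \<Rightarrow> ereal" where
  "modulus_cont f t = (SUP p \<in> {p. dist (fst p) (snd p) \<le> t}. ereal (dist (f (fst p)) (f (snd p))))"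

definition modulus_exp :: "('a::metric_space \<Rightarrow> 'b::metric_space) \<Rightarrow> real \<Rightarrow> ereal" where
  "modulus_exp f t = (INF p \<in> {p. dist (fst p) (snd p) \<ge> t}. ereal (dist (f (fst p)) (f (snd p))))"

definition uniform_embedding :: "('a::metric_space \<Rightarrow> 'b::metric_space) \<Rightarrow> bool" where
  "uniform_embedding f \<longleftrightarrow> ((modulus_cont f \<longlongrightarrow> 0) (at_right 0)) \<and> (\<forall>t>0. modulus_exp f t > 0)"

definition bilipschitz_embedding :: "('a::metric_space \<Rightarrow> 'b::metric_space) \<Rightarrow> bool" where
  "bilipschitz_embedding f \<longleftrightarrow> (\<exists>A\<ge>1. \<forall>t. modulus_cont f t \<le> ereal (A * t) \<and> modulus_exp f t \<ge> ereal (t / A))"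

definition Lip_on :: "'a::metric_space set \<Rightarrow> ('a \<Rightarrow> 'b::metric_space) \<Rightarrow> ereal" where
  "Lip_on S g = (SUP p \<in> {p. fst p \<in> S \<and> snd p \<in> S \<and> fst p \<noteq> snd p}.
                   ereal (dist (g (fst p)) (g (snd p)) / dist (fst p) (snd p)))"

definition distortion :: "('a::metric_space \<Rightarrow> 'b::metric_space) \<Rightarrow> ereal" where
  "distortion f = Lip_on UNIV f * Lip_on (range f) (inv f)"

end

theory Submission
  imports Defs
begin

lemma ediam_ge: "x \<in> E \<Longrightarrow> y \<in> E \<Longrightarrow> ereal (dist x y) \<le> ediam E"
  unfolding ediam_def by (auto intro!: SUP_upper2[of "(x,y)"])
lemma ediam_le: "(\<And>x y. x \<in> E \<Longrightarrow> y \<in> E \<Longrightarrow> ereal (dist x y) \<le> B) \<Longrightarrow> 0 \<le> B \<Longrightarrow> ediam E \<le> B"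
  unfolding ediam_def by (auto intro!: SUP_least)
lemma ediam_nonneg: "0 \<le> ediam E"
proof (cases "E = {}")
  case True thus ?thesis by (simp add: ediam_def)
next
  case False then obtain x where "x \<in> E" by auto
  from ediam_ge[OF this this] show ?thesis by (simp add: zero_ereal_def)
qed

lemma pullback:
  fixes f :: "'a::metric_space \<Rightarrow> 'b::metric_space" and \<V> :: "'b set set"
  assumes cov: "is_cover (UNIV::'b set) \<V>" "point_finite \<V>" "cover_diam \<V> \<le> ereal s"
    and leb: "\<forall>E::'b set. ediam E < ereal d \<longrightarrow> (\<exists>V\<in>\<V>. E \<subseteq> V)"
    and a: "\<forall>x1 x2. dist (f x1) (f x2) \<le> s \<longrightarrow> dist x1 x2 \<le> r"
    and b: "\<forall>E. ediam E < ereal \<delta> \<longrightarrow> ediam (f ` E) < ereal d"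
    and "0 \<le> \<delta>" "0 \<le> r"
  shows "ereal \<delta> \<le> Delta_u (UNIV::'a set) r"
proof -
  define \<U> where "\<U> = (\<lambda>V. f -` V) ` \<V>"
  have c1: "is_cover UNIV \<U>"
    using cov(1) unfolding is_cover_def \<U>_def by (auto, metis UNIV_I Union_iff)
  have c2: "point_finite \<U>"
    unfolding point_finite_def
  proof
    fix x
    have "{U \<in> \<U>. x \<in> U} \<subseteq> (\<lambda>V. f -` V) ` {V \<in> \<V>. f x \<in> V}"
      unfolding \<U>_def by auto
    moreover have "finite {V \<in> \<V>. f x \<in> V}" using cov(2) unfolding point_finite_def by auto
    ultimately show "finite {U \<in> \<U>. x \<in> U}" by (meson finite_surj)
  qed
  have c3: "cover_diam \<U> \<le> ereal r"
    unfolding cover_diam_def \<U>_def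
  proof (rule SUP_least)
    fix U assume "U \<in> (\<lambda>V. f -` V) ` \<V>"
    then obtain V where V: "V \<in> \<V>" "U = f -` V" by auto
    show "ediam U \<le> ereal r"
    proof (rule ediam_le)
      fix x y assume "x \<in> U" "y \<in> U"
      hence "ereal (dist (f x) (f y)) \<le> ediam V" using V by (auto intro: ediam_ge)
      also have "\<dots> \<le> cover_diam \<V>" unfolding cover_diam_def using V by (auto intro: SUP_upper)
      also have "\<dots> \<le> ereal s" by fact
      finally have "dist (f x) (f y) \<le> s" by simp
      thus "ereal (dist x y) \<le> ereal r" using a by auto
    qed (use assms in auto)
  qed
  have "ereal \<delta> \<le> lebesgue_number UNIV \<U>"
    unfolding lebesgue_number_def
  proof (rule SUP_upper2[of \<delta>])
    show "\<delta> \<in> {d. 0 \<le> d \<and> (\<forall>E. E \<subseteq> UNIV \<and> ediam E < ereal d \<longrightarrow> (\<exists>U\<in>\<U>. E \<subseteq> U))}"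
    proof (safe)
      show "0 \<le> \<delta>" by fact
      fix E :: "'a set" assume "ediam E < ereal \<delta>"
      hence "ediam (f ` E) < ereal d" using b by auto
      then obtain V where "V \<in> \<V>" "f ` E \<subseteq> V" using leb by auto
      thus "\<exists>U\<in>\<U>. E \<subseteq> U" unfolding \<U>_def by auto
    qed
  qed simp
  also have "\<dots> \<le> Delta_u (UNIV::'a set) r"
    unfolding Delta_u_def using c1 c2 c3 by (intro SUP_upper) auto
  finally show ?thesis .
qed

lemma mc_ge: "dist x y \<le> t \<Longrightarrow> ereal (dist (f x) (f y)) \<le> modulus_cont f t"
  unfolding modulus_cont_def by (auto intro!: SUP_upper2[of "(x,y)"])
lemma me_le: "dist x y \<ge> t \<Longrightarrow> modulus_exp f t \<le> ereal (dist (f x) (f y))"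
  unfolding modulus_exp_def by (auto intro!: INF_lower2[of "(x,y)"])

lemma part1:
  fixes f :: "'a::metric_space \<Rightarrow> 'b::metric_space"
  assumes Ystone: "\<forall>r>0. Delta_u (UNIV::'b set) r > 0"
    and ue: "uniform_embedding f" and r: "r > 0"
  shows "Delta_u (UNIV::'a set) r > 0"
proof -
  have lim: "(modulus_cont f \<longlongrightarrow> 0) (at_right 0)" and rho: "modulus_exp f r > 0"
    using ue r unfolding uniform_embedding_def by auto
  obtain s where s: "0 < ereal s" "ereal s < modulus_exp f r" using ereal_dense2[OF rho] by auto
  hence s0: "s > 0" by simp
  have "0 < Delta_u (UNIV::'b set) s" using Ystone s0 by auto
  then obtain \<V> where V: "is_cover (UNIV::'b set) \<V>" "point_finite \<V>" "cover_diam \<V> \<le> ereal s"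
     "0 < lebesgue_number UNIV \<V>"
    unfolding Delta_u_def less_SUP_iff by auto
  then obtain d where d: "0 < ereal d" "\<forall>E::'b set. ediam E < ereal d \<longrightarrow> (\<exists>V\<in>\<V>. E \<subseteq> V)"
    unfolding lebesgue_number_def less_SUP_iff by auto
  have "eventually (\<lambda>t. modulus_cont f t < ereal d) (at_right 0)"
    using order_tendstoD(2)[OF lim] d(1) by auto
  then obtain b where b: "b > 0" "\<forall>y>0. y < b \<longrightarrow> modulus_cont f y < ereal d"
    unfolding eventually_at_right[OF zero_less_one] by auto
  define \<delta> where "\<delta> = b / 2"
  have \<delta>: "\<delta> > 0" "modulus_cont f \<delta> < ereal d" using b unfolding \<delta>_def by auto
  have "ereal \<delta> \<le> Delta_u (UNIV::'a set) r"
  proof (rule pullback[OF V(1-3) d(2)])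
    show "\<forall>x1 x2. dist (f x1) (f x2) \<le> s \<longrightarrow> dist x1 x2 \<le> r"
    proof (intro allI impI, rule ccontr)
      fix x1 x2 assume h: "dist (f x1) (f x2) \<le> s" "\<not> dist x1 x2 \<le> r"
      hence "modulus_exp f r \<le> ereal (dist (f x1) (f x2))" by (intro me_le) auto
      hence "ereal s < ereal (dist (f x1) (f x2))" using s(2) by (meson less_le_trans)
      with h show False by auto
    qed
    show "\<forall>E. ediam E < ereal \<delta> \<longrightarrow> ediam (f ` E) < ereal d"
    proof (intro allI impI)
      fix E :: "'a set" assume E: "ediam E < ereal \<delta>"
      have "ediam (f ` E) \<le> modulus_cont f \<delta>"
      proof (rule ediam_le)
        fix x y assume "x \<in> f ` E" "y \<in> f ` E"
        then obtain x' y' where "x' \<in> E" "y' \<in> E" "x = f x'" "y = f y'" by auto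
        moreover have "ereal (dist x' y') \<le> ediam E" using calculation by (auto intro: ediam_ge)
        hence "ereal (dist x' y') < ereal \<delta>" using E by (meson le_less_trans)
        hence "dist x' y' \<le> \<delta>" by simp
        thus "ereal (dist x y) \<le> modulus_cont f \<delta>" using calculation by (auto intro!: mc_ge)
      next
        show "0 \<le> modulus_cont f \<delta>" using mc_ge[of undefined undefined \<delta> f] \<delta> by (simp add: zero_ereal_def)
      qed
      thus "ediam (f ` E) < ereal d" using \<delta> by auto
    qed
  qed (use \<delta> r in auto)
  thus ?thesis using \<delta> by (meson ereal_less(2) less_le_trans)
qed
lemma bilip_ue:
  fixes f :: "'a::metric_space \<Rightarrow> 'b::metric_space"
  assumes h: "\<forall>t. modulus_cont f t \<le> ereal (A * t) \<and> modulus_exp f t \<ge> ereal (t / A)" and A: "A \<ge> 1"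
  shows "uniform_embedding f"
  unfolding uniform_embedding_def
proof
  have l: "((\<lambda>t. ereal (A * t)) \<longlongrightarrow> ereal (A * 0)) (at_right 0)"
    by (intro tendsto_intros)
  show "(modulus_cont f \<longlongrightarrow> 0) (at_right 0)"
  proof (rule tendsto_sandwich[of "\<lambda>_. 0" _ _ "\<lambda>t. ereal (A * t)"])
    show "\<forall>\<^sub>F n in at_right 0. 0 \<le> modulus_cont f n"
      unfolding eventually_at_right[OF zero_less_one]
      using mc_ge[of undefined undefined _ f] by (auto simp: zero_ereal_def intro!: exI[of _ 1])
    show "\<forall>\<^sub>F n in at_right 0. modulus_cont f n \<le> ereal (A * n)" using h by auto
  qed (use l in \<open>auto simp: zero_ereal_def\<close>)
  show "\<forall>t>0. 0 < modulus_exp f t"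
  proof (intro allI impI)
    fix t :: real assume "t > 0"
    hence "0 < ereal (t / A)" using A by simp
    thus "0 < modulus_exp f t" using h by (meson less_le_trans)
  qed
qed

lemma part2:
  fixes f :: "'a::metric_space \<Rightarrow> 'b::metric_space" and c :: real
  assumes Ystone: "\<forall>r>0. Delta_u (UNIV::'b set) r > 0"
    and bl: "bilipschitz_embedding f" and c: "c > 0"
    and Yc: "\<forall>r>0. Delta_u (UNIV::'b set) r \<ge> ereal (c * r)" and r: "r > 0"
  shows "Delta_u (UNIV::'a set) r \<ge> ereal c / distortion f * ereal r"
proof -
  obtain A where A: "A \<ge> 1" and h: "\<forall>t. modulus_cont f t \<le> ereal (A * t) \<and> modulus_exp f t \<ge> ereal (t / A)"
    using bl unfolding bilipschitz_embedding_def by auto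
  have ue: "uniform_embedding f" by (rule bilip_ue[OF h A])
  have Dpos: "Delta_u (UNIV::'a set) r > 0" by (rule part1[OF Ystone ue r])
  have up: "dist (f x) (f y) \<le> A * dist x y" for x y
  proof -
    have "ereal (dist (f x) (f y)) \<le> modulus_cont f (dist x y)" by (rule mc_ge) simp
    also have "\<dots> \<le> ereal (A * dist x y)" using h by auto
    finally show ?thesis by simp
  qed
  have lo: "dist x y / A \<le> dist (f x) (f y)" for x y
  proof -
    have "ereal (dist x y / A) \<le> modulus_exp f (dist x y)" using h by auto
    also have "\<dots> \<le> ereal (dist (f x) (f y))" by (rule me_le) simp
    finally show ?thesis by simp
  qed
  have fne: "f x \<noteq> f y" if "x \<noteq> y" for x y
  proof -
    have "0 < dist x y / A" using that A by simp
    thus ?thesis using lo[of x y] by auto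
  qed
  hence injf: "inj f" unfolding inj_def by blast
  show ?thesis
  proof (cases "\<exists>a b::'a. a \<noteq> b")
    case False
    have e1: "{p::'a\<times>'a. fst p \<in> UNIV \<and> snd p \<in> UNIV \<and> fst p \<noteq> snd p} = {}" using False by auto
    have e2: "{p. fst p \<in> range f \<and> snd p \<in> range f \<and> fst p \<noteq> snd p} = {}" using False by (auto, metis)
    have "distortion f = \<infinity>"
      unfolding distortion_def Lip_on_def e1 e2 by (simp add: bot_ereal_def)
    thus ?thesis using Dpos by simp
  next
    case True
    then obtain a b :: 'a where ab: "a \<noteq> b" by auto
    have dab: "dist a b > 0" using ab by simp
    let ?L1 = "Lip_on UNIV f" and ?L2 = "Lip_on (range f) (inv f)"
    have L1le: "?L1 \<le> ereal A"
      unfolding Lip_on_def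
    proof (rule SUP_least)
      fix p :: "'a \<times> 'a" assume "p \<in> {p. fst p \<in> UNIV \<and> snd p \<in> UNIV \<and> fst p \<noteq> snd p}"
      hence "dist (fst p) (snd p) > 0" by auto
      thus "ereal (dist (f (fst p)) (f (snd p)) / dist (fst p) (snd p)) \<le> ereal A"
        using up[of "fst p" "snd p"] by (simp add: pos_divide_le_eq)
    qed
    have r1: "0 < dist (f a) (f b) / dist a b" using fne[OF ab] dab by simp
    have L1ge: "ereal (dist (f a) (f b) / dist a b) \<le> ?L1"
      unfolding Lip_on_def using ab by (intro SUP_upper2[of "(a,b)"]) auto
    obtain l1 where l1: "?L1 = ereal l1" using L1le L1ge by (cases ?L1) auto
    have l1p: "l1 > 0" using L1ge r1 l1 by simp
    have L2le: "?L2 \<le> ereal A"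
      unfolding Lip_on_def
    proof (rule SUP_least)
      fix p :: "'b \<times> 'b" assume "p \<in> {p. fst p \<in> range f \<and> snd p \<in> range f \<and> fst p \<noteq> snd p}"
      then obtain x y where p: "p = (f x, f y)" "f x \<noteq> f y" by (cases p) auto
      have "dist (f x) (f y) > 0" using p by simp
      moreover have "dist x y \<le> A * dist (f x) (f y)" using lo[of x y] A by (simp add: divide_le_eq mult.commute)
      ultimately show "ereal (dist (inv f (fst p)) (inv f (snd p)) / dist (fst p) (snd p)) \<le> ereal A"
        using p injf by (simp add: pos_divide_le_eq)
    qed
    have r2: "0 < dist a b / dist (f a) (f b)" using fne[OF ab] dab by simp
    have L2ge: "ereal (dist a b / dist (f a) (f b)) \<le> ?L2"
      unfolding Lip_on_def using fne[OF ab] injf by (intro SUP_upper2[of "(f a, f b)"]) auto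
    obtain l2 where l2: "?L2 = ereal l2" using L2le L2ge by (cases ?L2) auto
    have l2p: "l2 > 0" using L2ge r2 l2 by simp
    have Lf: "dist (f x) (f y) \<le> l1 * dist x y" for x y
    proof (cases "x = y")
      case False
      have "ereal (dist (f x) (f y) / dist x y) \<le> ?L1"
        unfolding Lip_on_def using False by (intro SUP_upper2[of "(x,y)"]) auto
      thus ?thesis using False l1 by (simp add: pos_divide_le_eq)
    qed simp
    have Li: "dist x y \<le> l2 * dist (f x) (f y)" for x y
    proof (cases "x = y")
      case False
      have "ereal (dist x y / dist (f x) (f y)) \<le> ?L2"
        unfolding Lip_on_def using fne[OF False] injf by (intro SUP_upper2[of "(f x, f y)"]) auto
      thus ?thesis using fne[OF False] l2 by (simp add: pos_divide_le_eq)
    qed simp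
    have dist_eq: "ereal c / distortion f * ereal r = ereal (c * r / (l1 * l2))"
      unfolding distortion_def l1 l2 using l1p l2p by (simp add: ereal_divide)
    define B where "B = c * r / (l1 * l2)"
    have key: "ereal y \<le> Delta_u (UNIV::'a set) r" if y: "0 < y" "y < B" for y
    proof -
      define s where "s = r / l2"
      have s0: "s > 0" using r l2p unfolding s_def by simp
      have "y * l1 < c * s" using y l1p l2p unfolding B_def s_def by (simp add: field_simps)
      hence "ereal (y * l1) < ereal (c * s)" by simp
      also have "\<dots> \<le> Delta_u (UNIV::'b set) s" using Yc s0 by blast
      finally have "ereal (y * l1) < Delta_u (UNIV::'b set) s" .
      then obtain \<V> where V: "is_cover (UNIV::'b set) \<V>" "point_finite \<V>" "cover_diam \<V> \<le> ereal s"
        "ereal (y * l1) < lebesgue_number UNIV \<V>"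
        unfolding Delta_u_def less_SUP_iff by auto
      then obtain d where d: "y * l1 < d" "\<forall>E::'b set. ediam E < ereal d \<longrightarrow> (\<exists>V\<in>\<V>. E \<subseteq> V)"
        unfolding lebesgue_number_def less_SUP_iff by auto
      show ?thesis
      proof (rule pullback[OF V(1-3) d(2)])
        show "\<forall>x1 x2. dist (f x1) (f x2) \<le> s \<longrightarrow> dist x1 x2 \<le> r"
        proof (intro allI impI)
          fix x1 x2 assume "dist (f x1) (f x2) \<le> s"
          hence "l2 * dist (f x1) (f x2) \<le> l2 * s" using l2p by simp
          also have "l2 * s = r" unfolding s_def using l2p by simp
          finally show "dist x1 x2 \<le> r" using Li[of x1 x2] by simp
        qed
        show "\<forall>E. ediam E < ereal y \<longrightarrow> ediam (f ` E) < ereal d"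
        proof (intro allI impI)
          fix E :: "'a set" assume E: "ediam E < ereal y"
          then obtain e where e: "ediam E < ereal e" "ereal e < ereal y" using ereal_dense2 by blast
          have "0 < ereal e" using e(1) ediam_nonneg[of E] by (rule le_less_trans[rotated])
          hence e0: "0 < e" by simp
          have "ediam (f ` E) \<le> ereal (l1 * e)"
          proof (rule ediam_le)
            fix x y assume "x \<in> f ` E" "y \<in> f ` E"
            then obtain x' y' where xy: "x' \<in> E" "y' \<in> E" "x = f x'" "y = f y'" by auto
            have "ereal (dist x' y') \<le> ediam E" using xy by (auto intro: ediam_ge)
            hence "ereal (dist x' y') < ereal e" using e(1) by (meson le_less_trans)
            hence "dist x' y' \<le> e" by simp
            hence "l1 * dist x' y' \<le> l1 * e" using l1p by simp
            thus "ereal (dist x y) \<le> ereal (l1 * e)" using Lf[of x' y'] xy by simp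
          qed (use e0 l1p in simp)
          moreover have "l1 * e < d"
          proof -
            have "e < y" using e(2) by simp
            hence "l1 * e < l1 * y" using l1p by simp
            thus ?thesis using d(1) by (simp add: mult.commute)
          qed
          hence "ereal (l1 * e) < ereal d" by simp
          ultimately show "ediam (f ` E) < ereal d" by (rule le_less_trans)
        qed
      qed (use y r in auto)
    qed
    have "ereal B \<le> Delta_u (UNIV::'a set) r"
    proof (rule ccontr)
      assume "\<not> ereal B \<le> Delta_u (UNIV::'a set) r"
      hence "Delta_u (UNIV::'a set) r < ereal B" by simp
      then obtain z where z: "Delta_u (UNIV::'a set) r < ereal z" "ereal z < ereal B" using ereal_dense2 by blast
      have "0 < z" using z(1) Dpos by (metis ereal_less(2) less_trans zero_ereal_def)
      hence "ereal z \<le> Delta_u (UNIV::'a set) r" using key z(2) by simp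
      thus False using z(1) by simp
    qed
    thus ?thesis using dist_eq unfolding B_def by simp
  qed
qed


theorem proposition3p8:
  fixes f :: "'a::metric_space \<Rightarrow> 'b::metric_space" and c :: real
  assumes Ystone: "\<forall>r>0. Delta_u (UNIV::'b set) r > 0"
  shows "(uniform_embedding f \<longrightarrow> (\<forall>r>0. Delta_u (UNIV::'a set) r > 0)) \<and>
         (bilipschitz_embedding f \<and> c > 0 \<and> (\<forall>r>0. Delta_u (UNIV::'b set) r \<ge> ereal (c * r))
            \<longrightarrow> (\<forall>r>0. Delta_u (UNIV::'a set) r \<ge> ereal c / distortion f * ereal r))"
  using part1[OF Ystone, of f] part2[OF Ystone, of f c] by blast

end
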